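(* Let $\mathcal{D}$ be a combinatorial description of a simple pseudoline arrangement. Then there is a line arrangement realizing $\mathcal{D}$ in the Euclidean plane $\mathbb{R}^2$ if and only if there is a line arrangement realizing $\mathcal{D}$ in the hyperbolic plane $\mathbb{H}^2$.
   Context: A pseudoline arrangement $\mathcal{A}$ is a collection of pseudolines ($x$-monotone curves in $\mathbb{R}^2$) such that each pair of curves intersects at most once. Each pseudoline $\ell\in\mathcal{A}$ is oriented and thus divides the plane into two open half-planes $\ell^-$ and $\ell^+$. The arrangement is simple if any two (pseudo)lines intersect exactly once and no three intersect in the same point. For $\mathcal{A}=\{\ell_1,\dots,\ell_n\}$, each point $p$ gets a sign vector $\sigma(p)=(\sigma_i(p))_{i=1}^n\in\{-,0,+\}^n$, where $\sigma_i(p)=-$ if $p\in\ell_i^-$, $0$ if $p\in\ell_i$, and $+$ if $p\in\ell_i^+$. The combinatorial description $\mathcal{D}$ of $\mathcal{A}$ is the set $\{\sigma(p)\mid p\in\mathbb{R}^2\}$, and an arrangement with this set of sign vectors is said to realize $\mathcal{D}$. A line arrangement in $\mathbb{H}^2$ is an arrangement of (oriented) hyperbolic lines, with sign vectors and combinatorial description defined analogously over points of $\mathbb{H}^2$. *)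

theory Defs
  imports Complex_Main
begin

datatype sign3 = Neg | Zer | Pos

definition sign_of :: "real \<Rightarrow> sign3" where
  "sign_of r = (if r < 0 then Neg else if r = 0 then Zer else Pos)"

(* Combinatorial description: the set of sign vectors of all points of the
   domain S, where the i-th oriented curve is given by a function g_i whose
   zero set is the curve, whose negative set is the half-plane l^- and
   whose positive set is the half-plane l^+. *)
definition comb_descr :: "(real \<times> real) set \<Rightarrow> ((real \<times> real) \<Rightarrow> real) list \<Rightarrow> sign3 list set" where
  "comb_descr S gs = {map (\<lambda>g. sign_of (g p)) gs | p. p \<in> S}"

(* An oriented pseudoline: the graph of a continuous function f : R -> R
   (an x-monotone curve), with an orientation flag o: if o then l^+ is the
   region above the graph, otherwise l^+ is the region below it. *)
type_synonym opseudoline = "(real \<Rightarrow> real) \<times> bool"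

definition pl_fun :: "opseudoline \<Rightarrow> (real \<times> real) \<Rightarrow> real" where
  "pl_fun l p = (if snd l then snd p - fst l (fst p) else fst l (fst p) - snd p)"

definition pseudoline_arrangement :: "opseudoline list \<Rightarrow> bool" where
  "pseudoline_arrangement A \<longleftrightarrow>
     (\<forall>l \<in> set A. continuous_on UNIV (fst l)) \<and>
     (\<forall>i < length A. \<forall>j < length A. i \<noteq> j \<longrightarrow>
        (\<forall>x1 x2. fst (A!i) x1 = fst (A!j) x1 \<and> fst (A!i) x2 = fst (A!j) x2 \<longrightarrow> x1 = x2))"

definition simple_pseudoline_arrangement :: "opseudoline list \<Rightarrow> bool" where
  "simple_pseudoline_arrangement A \<longleftrightarrow>
     pseudoline_arrangement A \<and>
     (\<forall>i < length A. \<forall>j < length A. i \<noteq> j \<longrightarrow>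
        (\<exists>!x. fst (A!i) x = fst (A!j) x)) \<and>
     (\<forall>i < length A. \<forall>j < length A. \<forall>k < length A.
        i \<noteq> j \<and> j \<noteq> k \<and> i \<noteq> k \<longrightarrow>
        \<not> (\<exists>x. fst (A!i) x = fst (A!j) x \<and> fst (A!j) x = fst (A!k) x))"

definition pseudo_descr :: "opseudoline list \<Rightarrow> sign3 list set" where
  "pseudo_descr A = comb_descr UNIV (map pl_fun A)"

(* An oriented Euclidean line {p. a*x + b*y = c} with (a,b) \<noteq> (0,0);
   l^- = {a*x+b*y < c}, l^+ = {a*x+b*y > c}.  Both orientations of every
   line are covered by (a,b,c) and (-a,-b,-c). *)
type_synonym oline = "real \<times> real \<times> real"

definition line_fun :: "oline \<Rightarrow> (real \<times> real) \<Rightarrow> real" where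
  "line_fun l p = (case l of (a, b, c) \<Rightarrow> a * fst p + b * snd p - c)"

definition nondeg_line :: "oline \<Rightarrow> bool" where
  "nondeg_line l = (case l of (a, b, c) \<Rightarrow> a \<noteq> 0 \<or> b \<noteq> 0)"

definition euclid_line_arrangement :: "oline list \<Rightarrow> bool" where
  "euclid_line_arrangement L \<longleftrightarrow>
     (\<forall>l \<in> set L. nondeg_line l) \<and>
     (\<forall>i < length L. \<forall>j < length L. i \<noteq> j \<longrightarrow>
        {p. line_fun (L!i) p = 0} \<noteq> {p. line_fun (L!j) p = 0})"

definition euclid_descr :: "oline list \<Rightarrow> sign3 list set" where
  "euclid_descr L = comb_descr UNIV (map line_fun L)"

(* The hyperbolic plane H^2 in the Beltrami-Klein model: the open unit disk,
   whose hyperbolic lines are exactly the nonempty intersections of Euclidean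
   lines with the disk (open chords); the two sides of a hyperbolic line are
   the intersections of the disk with the two Euclidean half-planes. *)
definition klein_disk :: "(real \<times> real) set" where
  "klein_disk = {p. (fst p)\<^sup>2 + (snd p)\<^sup>2 < 1}"

definition hyp_line_arrangement :: "oline list \<Rightarrow> bool" where
  "hyp_line_arrangement L \<longleftrightarrow>
     (\<forall>l \<in> set L. nondeg_line l \<and> (\<exists>p \<in> klein_disk. line_fun l p = 0)) \<and>
     (\<forall>i < length L. \<forall>j < length L. i \<noteq> j \<longrightarrow>
        {p \<in> klein_disk. line_fun (L!i) p = 0} \<noteq> {p \<in> klein_disk. line_fun (L!j) p = 0})"

definition hyp_descr :: "oline list \<Rightarrow> sign3 list set" where
  "hyp_descr L = comb_descr klein_disk (map line_fun L)"

end

theory Submission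
  imports Defs "HOL-Analysis.Analysis"
begin


definition sv :: "oline list \<Rightarrow> real \<times> real \<Rightarrow> sign3 list" where
  "sv L p = map (\<lambda>l. sign_of (line_fun l p)) L"

lemma euclid_descr_sv: "euclid_descr L = range (sv L)"
  unfolding euclid_descr_def comb_descr_def sv_def by (auto simp: comp_def)

lemma hyp_descr_sv: "hyp_descr L = sv L ` klein_disk"
  unfolding hyp_descr_def comb_descr_def sv_def by (auto simp: comp_def)

lemma sv_nth: "i < length L \<Longrightarrow> sv L p ! i = sign_of (line_fun (L!i) p)"
  by (simp add: sv_def)

lemma length_sv[simp]: "length (sv L p) = length L"
  by (simp add: sv_def)

lemma sign_of_Zer: "sign_of r = Zer \<longleftrightarrow> r = 0"
  by (simp add: sign_of_def)

definition ws :: "((real\<times>real) \<Rightarrow> real) \<Rightarrow> real\<times>real \<Rightarrow> real\<times>real \<Rightarrow> bool" where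
  "ws g p q \<longleftrightarrow> (g p > 0 \<longrightarrow> g q \<ge> 0) \<and> (g p < 0 \<longrightarrow> g q \<le> 0) \<and> (g p = 0 \<longrightarrow> g q = 0)"

lemma ws_refl: "ws g p p" by (auto simp: ws_def)

lemma ws_trans: "ws g p q \<Longrightarrow> ws g q r \<Longrightarrow> ws g p r"
  unfolding ws_def by (smt (verit))

lemma line_fun_affine:
  "line_fun l (p + t *\<^sub>R (z - p)) = (1-t) * line_fun l p + t * line_fun l z"
  by (cases l) (simp add: line_fun_def algebra_simps)

lemma open_disk: "open klein_disk"
  unfolding klein_disk_def
  by (intro open_Collect_less continuous_intros)

lemma perturb:
  assumes y: "y \<in> klein_disk" and w: "\<forall>i<length H. ws (line_fun (H!i)) p y"
  shows "\<exists>q\<in>klein_disk. sv H q = sv H p"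
proof -
  obtain e where e: "e > 0" "ball y e \<subseteq> klein_disk"
    using open_disk y open_contains_ball by blast
  define t where "t = min (1/2) (e / (2*(norm (p - y) + 1)))"
  have "e / (2*(norm (p - y) + 1)) > 0" using e(1) by (intro divide_pos_pos) (auto intro: add_nonneg_pos)
  then have t0: "t > 0" "t < 1" by (auto simp: t_def)
  define q where "q = y + t *\<^sub>R (p - y)"
  have "dist y q = t * norm (p - y)" using t0 by (simp add: q_def dist_norm)
  also have "\<dots> \<le> (e / (2*(norm (p - y) + 1))) * norm (p - y)"
    by (intro mult_right_mono) (auto simp: t_def)
  also have "\<dots> < e"
  proof -
    have n0: "norm (p - y) \<ge> 0" by simp
    have aux: "\<And>x::real. x \<ge> 0 \<Longrightarrow> x < 2*(x+1)" by (simp add: algebra_simps)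
    have "norm (p - y) < 2*(norm (p - y) + 1)" by (rule aux[OF n0])
    then have m: "e * norm (p - y) < e * (2*(norm (p - y) + 1))"
      by (rule mult_strict_left_mono[OF _ e(1)])
    have d: "2*(norm (p - y) + 1) > 0" using aux[OF n0] n0 by linarith
    have "e / (2*(norm (p - y) + 1)) * norm (p - y) = e * norm (p - y) / (2*(norm (p - y) + 1))"
      by simp
    also have "\<dots> < e" using m d by (simp add: pos_divide_less_eq mult.commute)
    finally show ?thesis .
  qed
  finally have "q \<in> klein_disk" using e by auto
  moreover have "sv H q = sv H p"
  proof (rule nth_equalityI)
    fix i assume i: "i < length (sv H q)"
    have aff: "line_fun (H!i) q = (1-t) * line_fun (H!i) y + t * line_fun (H!i) p"
      unfolding q_def by (rule line_fun_affine)
    have "ws (line_fun (H!i)) p y" using w i by simp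
    then have "sign_of (line_fun (H!i) q) = sign_of (line_fun (H!i) p)"
    proof -
      assume W: "ws (line_fun (H!i)) p y"
      define a where "a = line_fun (H!i) y"
      define b where "b = line_fun (H!i) p"
      have 1: "1 - t > 0" using t0 by simp
      have "(b > 0 \<longrightarrow> a \<ge> 0) \<and> (b < 0 \<longrightarrow> a \<le> 0) \<and> (b = 0 \<longrightarrow> a = 0)"
        using W unfolding ws_def a_def b_def by simp
      moreover have "b > 0 \<Longrightarrow> a \<ge> 0 \<Longrightarrow> (1-t)*a + t*b > 0"
        using 1 t0 by (simp add: add_nonneg_pos)
      moreover have "b < 0 \<Longrightarrow> a \<le> 0 \<Longrightarrow> (1-t)*a + t*b < 0"
        using 1 t0 by (simp add: add_nonpos_neg mult_pos_neg mult_nonneg_nonpos)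
      ultimately have "sign_of ((1-t)*a + t*b) = sign_of b"
        unfolding sign_of_def by (cases "b > 0"; cases "b < 0") auto
      then show ?thesis unfolding aff a_def b_def .
    qed
    then show "sv H q ! i = sv H p ! i" using i by (simp add: sv_nth)
  qed simp
  ultimately show ?thesis by blast
qed



lemma advance:
  fixes H :: "oline list"
  assumes pz: "\<forall>i<length H. line_fun (H!i) p = 0 \<longrightarrow> line_fun (H!i) z = 0"
    and k: "k < length H" "line_fun (H!k) p \<noteq> 0" "line_fun (H!k) z = 0"
  shows "\<exists>q. (\<forall>i<length H. ws (line_fun (H!i)) p q) \<and>
             (\<exists>j<length H. line_fun (H!j) p \<noteq> 0 \<and> line_fun (H!j) q = 0)"
proof -
  define A where "A i = line_fun (H!i) p" for i
  define B where "B i = line_fun (H!i) z" for i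
  define h where "h i t = (1-t) * A i + t * B i" for i t
  have hq: "line_fun (H!i) (p + t *\<^sub>R (z - p)) = h i t" for i t
    unfolding h_def A_def B_def by (rule line_fun_affine)
  define T where "T = {t. 0 \<le> t \<and> t \<le> 1 \<and> (\<exists>i<length H. A i \<noteq> 0 \<and> h i t = 0)}"
  have root: "t = A i / (A i - B i) \<and> A i - B i \<noteq> 0" if "A i \<noteq> 0" "h i t = 0" for i t
  proof -
    have "t * (A i - B i) = A i" using that(2) unfolding h_def by (simp add: algebra_simps)
    then have "A i - B i \<noteq> 0" using that(1) by auto
    with \<open>t * (A i - B i) = A i\<close> show ?thesis by (simp add: field_simps)
  qed
  have "T \<subseteq> (\<lambda>i. A i / (A i - B i)) ` {..<length H}"
    unfolding T_def using root by blast
  then have fin: "finite T" by (rule finite_subset) simp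
  have "1 \<in> T" unfolding T_def h_def using k by (auto simp: A_def B_def)
  then have ne: "T \<noteq> {}" by auto
  define t0 where "t0 = Min T"
  have t0T: "t0 \<in> T" unfolding t0_def using fin ne by simp
  have t0min: "t0 \<le> t" if "t \<in> T" for t unfolding t0_def using fin that by simp
  have t0pos: "t0 > 0"
  proof -
    from t0T obtain i where "i < length H" "A i \<noteq> 0" "h i t0 = 0" "t0 \<ge> 0" unfolding T_def by auto
    then show ?thesis unfolding h_def by (cases "t0 = 0") auto
  qed
  have t01: "t0 \<le> 1" using t0T unfolding T_def by auto
  define q where "q = p + t0 *\<^sub>R (z - p)"
  have "ws (line_fun (H!i)) p q" if i: "i < length H" for i
  proof -
    have Aeq: "line_fun (H!i) p = A i" by (simp add: A_def)
    have qeq: "line_fun (H!i) q = h i t0" unfolding q_def by (rule hq)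
    have c1: "h i t0 \<ge> 0" if "A i > 0"
    proof (rule ccontr)
      assume neg: "\<not> h i t0 \<ge> 0"
      then have "t0 * (A i - B i) > A i" unfolding h_def by (simp add: algebra_simps)
      then have ab: "A i - B i > 0" using that t0pos
        by (smt (verit) mult_pos_neg mult_pos_pos mult_nonneg_nonpos)
      define t' where "t' = A i / (A i - B i)"
      have "t' < t0" unfolding t'_def using ab \<open>t0 * (A i - B i) > A i\<close>
        by (simp add: pos_divide_less_eq)
      moreover have "t' > 0" unfolding t'_def using ab that by simp
      moreover have "h i t' = 0" unfolding h_def t'_def using ab by (simp add: field_simps)
      ultimately have "t' \<in> T" unfolding T_def using t01 i that by auto
      then show False using t0min \<open>t' < t0\<close> by fastforce
    qed
    have c2: "h i t0 \<le> 0" if "A i < 0"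
    proof (rule ccontr)
      assume neg: "\<not> h i t0 \<le> 0"
      then have "t0 * (B i - A i) > - A i" unfolding h_def by (simp add: algebra_simps)
      then have ab: "B i - A i > 0" using that t0pos
        by (smt (verit) mult_pos_neg mult_pos_pos mult_nonneg_nonpos)
      define t' where "t' = A i / (A i - B i)"
      have t'e: "t' = (- A i) / (B i - A i)" unfolding t'_def
        by (metis minus_diff_eq minus_divide_divide)
      have "t' < t0" unfolding t'e using ab \<open>t0 * (B i - A i) > - A i\<close>
        by (metis pos_divide_less_eq mult.commute)
      moreover have "t' > 0" unfolding t'e using ab that by (intro divide_pos_pos) auto
      moreover have "h i t' = 0" unfolding h_def t'_def using ab by (simp add: field_simps)
      ultimately have "t' \<in> T" unfolding T_def using t01 i that by auto
      then show False using t0min \<open>t' < t0\<close> by fastforce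
    qed
    have c3: "h i t0 = 0" if "A i = 0"
      using pz i that unfolding h_def A_def B_def by simp
    show ?thesis unfolding ws_def Aeq qeq using c1 c2 c3 by auto
  qed
  moreover have "\<exists>j<length H. line_fun (H!j) p \<noteq> 0 \<and> line_fun (H!j) q = 0"
    using t0T unfolding T_def q_def hq by (auto simp: A_def)
  ultimately show ?thesis by blast
qed

lemma two_lines_same:
  assumes n1: "nondeg_line l1" and n2: "nondeg_line l2"
    and v: "line_fun l1 v = 0" "line_fun l2 v = 0"
    and p: "line_fun l1 p = 0" "line_fun l2 p = 0" and pv: "p \<noteq> v"
  shows "{q. line_fun l1 q = 0} = {q. line_fun l2 q = 0}"
proof -
  obtain a1 b1 c1 where l1: "l1 = (a1,b1,c1)" by (cases l1)
  obtain a2 b2 c2 where l2: "l2 = (a2,b2,c2)" by (cases l2)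
  obtain u1 u2 where vv: "v = (u1,u2)" by (cases v)
  obtain p1 p2 where pp: "p = (p1,p2)" by (cases p)
  have e1: "a1 * u1 + b1 * u2 = c1" "a2 * u1+b2 * u2 = c2" "a1 * p1+b1 * p2 = c1" "a2 * p1+b2 * p2 = c2"
    using v p by (auto simp: l1 l2 vv pp line_fun_def)
  have d: "p1 - u1 \<noteq> 0 \<or> p2 - u2 \<noteq> 0" using pv by (auto simp: pp vv)
  have "a1 * (p1-u1) + b1 * (p2-u2) = 0" "a2 * (p1-u1) + b2 * (p2-u2) = 0"
    using e1 by (simp_all add: algebra_simps)
  note F = this
  have "(a1 * b2 - a2 * b1) * (p1 - u1) = b2 * (a1 * (p1-u1) + b1 * (p2-u2)) - b1 * (a2 * (p1-u1) + b2 * (p2-u2))"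
    "(a1 * b2 - a2 * b1) * (p2 - u2) = a1 * (a2 * (p1-u1) + b2 * (p2-u2)) - a2 * (a1 * (p1-u1) + b1 * (p2-u2))"
    by (simp_all add: algebra_simps)
  then have "(a1 * b2 - a2 * b1) * (p1 - u1) = 0" "(a1 * b2 - a2 * b1) * (p2 - u2) = 0"
    using F by simp_all
  then have det: "a1 * b2 - a2 * b1 = 0" using d by auto
  have nd: "a1 \<noteq> 0 \<or> b1 \<noteq> 0" "a2 \<noteq> 0 \<or> b2 \<noteq> 0" using n1 n2 by (auto simp: l1 l2 nondeg_line_def)
  have key: "line_fun l1 q = 0 \<longleftrightarrow> line_fun l2 q = 0" for q
  proof -
    obtain q1 q2 where qq: "q = (q1,q2)" by (cases q)
    define X where "X = a1 * (q1-u1) + b1 * (q2-u2)"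
    define Y where "Y = a2 * (q1-u1) + b2 * (q2-u2)"
    have lx: "line_fun l1 q = X" "line_fun l2 q = Y"
      using e1 by (auto simp: l1 l2 qq line_fun_def X_def Y_def algebra_simps)
    have "a1*Y - a2*X = (a1 * b2 - a2 * b1) * (q2-u2)" "b1*Y - b2*X = - (a1 * b2 - a2 * b1) * (q1-u1)"
      unfolding X_def Y_def by (simp_all add: algebra_simps)
    then have r1: "a1*Y - a2*X = 0" and r2: "b1*Y - b2*X = 0" using det by simp_all
    show ?thesis unfolding lx using r1 r2 nd by auto
  qed
  then show ?thesis by auto
qed



definition vert_ok :: "oline list \<Rightarrow> bool" where
  "vert_ok H \<longleftrightarrow> (\<forall>i<length H. \<forall>j<length H. i \<noteq> j \<longrightarrow>
     (\<exists>v\<in>klein_disk. line_fun (H!i) v = 0 \<and> line_fun (H!j) v = 0))"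

lemma vert_in:
  assumes hyp: "hyp_line_arrangement H" and vert: "vert_ok H"
    and ij: "i < length H" "j < length H" "i \<noteq> j"
    and q: "line_fun (H!i) q = 0" "line_fun (H!j) q = 0"
  shows "q \<in> klein_disk"
proof (rule ccontr)
  assume nq: "q \<notin> klein_disk"
  obtain v where v: "v \<in> klein_disk" "line_fun (H!i) v = 0" "line_fun (H!j) v = 0"
    using vert ij unfolding vert_ok_def by blast
  have "q \<noteq> v" using v nq by auto
  moreover have "nondeg_line (H!i)" "nondeg_line (H!j)"
    using hyp ij unfolding hyp_line_arrangement_def by auto
  ultimately have "{p. line_fun (H!i) p = 0} = {p. line_fun (H!j) p = 0}"
    using two_lines_same v q by blast
  then have "{p \<in> klein_disk. line_fun (H!i) p = 0} = {p \<in> klein_disk. line_fun (H!j) p = 0}"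
    by blast
  then show False using hyp ij unfolding hyp_line_arrangement_def by blast
qed

lemma claim1:
  assumes hyp: "hyp_line_arrangement H" and vert: "vert_ok H"
    and n2: "length H \<ge> 2" and k: "k < length H" "line_fun (H!k) p = 0"
  shows "\<exists>y\<in>klein_disk. \<forall>i<length H. ws (line_fun (H!i)) p y"
proof (cases "\<exists>j<length H. j \<noteq> k \<and> line_fun (H!j) p = 0")
  case True
  then obtain j where "j < length H" "j \<noteq> k" "line_fun (H!j) p = 0" by blast
  then have "p \<in> klein_disk" using vert_in[OF hyp vert k(1)] k by blast
  then show ?thesis using ws_refl by blast
next
  case False
  define m where "m = (if k = 0 then 1 else 0::nat)"
  have m: "m < length H" "m \<noteq> k" using n2 k by (auto simp: m_def)
  obtain z where z: "z \<in> klein_disk" "line_fun (H!k) z = 0" "line_fun (H!m) z = 0"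
    using vert m k unfolding vert_ok_def by metis
  have pz: "\<forall>i<length H. line_fun (H!i) p = 0 \<longrightarrow> line_fun (H!i) z = 0"
    using False z by auto
  have "line_fun (H!m) p \<noteq> 0" using False m by auto
  then obtain q j where q: "\<forall>i<length H. ws (line_fun (H!i)) p q"
    and j: "j < length H" "line_fun (H!j) p \<noteq> 0" "line_fun (H!j) q = 0"
    using advance[OF pz m(1)] z by blast
  have "j \<noteq> k" using j k by auto
  moreover have "line_fun (H!k) q = 0" using q k unfolding ws_def by auto
  ultimately have "q \<in> klein_disk" using vert_in[OF hyp vert k(1) j(1)] j by auto
  then show ?thesis using q by blast
qed

lemma find_y:
  assumes hyp: "hyp_line_arrangement H" and vert: "vert_ok H"
  shows "\<exists>y\<in>klein_disk. \<forall>i<length H. ws (line_fun (H!i)) p y"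
proof -
  have disk0: "(0,0) \<in> klein_disk" by (simp add: klein_disk_def)
  consider "length H = 0" | "length H = 1" | "length H \<ge> 2" by linarith
  then show ?thesis
  proof cases
    case 1 then show ?thesis using disk0 by auto
  next
    case 2
    then have "H!0 \<in> set H" by simp
    then obtain y where y: "y \<in> klein_disk" "line_fun (H!0) y = 0"
      using hyp unfolding hyp_line_arrangement_def by blast
    have "ws (line_fun (H!0)) p y" using y unfolding ws_def by auto
    then show ?thesis using y 2 by (metis less_one)
  next
    case 3
    show ?thesis
    proof (cases "\<exists>k<length H. line_fun (H!k) p = 0")
      case True
      then show ?thesis using claim1[OF hyp vert 3] by blast
    next
      case False
      obtain z where z: "z \<in> klein_disk" "line_fun (H!0) z = 0" "line_fun (H!1) z = 0"
        using vert 3 unfolding vert_ok_def by (metis One_nat_def Suc_1 Suc_le_lessD less_le_trans zero_less_one zero_neq_one le_less)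
      obtain q j where q: "\<forall>i<length H. ws (line_fun (H!i)) p q"
        and j: "j < length H" "line_fun (H!j) q = 0"
      proof -
        have "0 < length H" using 3 by linarith
        then have "\<exists>q. (\<forall>i<length H. ws (line_fun (H!i)) p q) \<and>
             (\<exists>j<length H. line_fun (H!j) p \<noteq> 0 \<and> line_fun (H!j) q = 0)"
          using advance[of H p z 0] False z by blast
        then show ?thesis using that by blast
      qed
      obtain y where y: "y \<in> klein_disk" "\<forall>i<length H. ws (line_fun (H!i)) q y"
        using claim1[OF hyp vert 3 j] by blast
      show ?thesis using q y ws_trans by blast
    qed
  qed
qed

lemma hyp_to_euc:
  assumes hyp: "hyp_line_arrangement H" and vert: "vert_ok H"
  shows "euclid_descr H = hyp_descr H"
proof
  show "hyp_descr H \<subseteq> euclid_descr H"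
    unfolding euclid_descr_sv hyp_descr_sv by auto
  show "euclid_descr H \<subseteq> hyp_descr H"
  proof
    fix s assume "s \<in> euclid_descr H"
    then obtain p where s: "s = sv H p" unfolding euclid_descr_sv by auto
    obtain y where "y \<in> klein_disk" "\<forall>i<length H. ws (line_fun (H!i)) p y"
      using find_y[OF hyp vert] by blast
    then obtain q where "q \<in> klein_disk" "sv H q = sv H p" using perturb by blast
    then show "s \<in> hyp_descr H" unfolding hyp_descr_sv s by (metis image_eqI)
  qed
qed



lemma pseudo_descr_nth:
  "s \<in> pseudo_descr A \<longleftrightarrow> (\<exists>p. s = map (\<lambda>l. sign_of (pl_fun l p)) A)"
  unfolding pseudo_descr_def comb_descr_def by (auto simp: comp_def)

lemma pl_on: "pl_fun l (x, fst l x) = 0"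
  by (simp add: pl_fun_def)

lemma pl_off: "pl_fun l (x, y) = 0 \<longleftrightarrow> fst l x = y"
  by (auto simp: pl_fun_def)

lemma pseudo_facts:
  assumes A: "simple_pseudoline_arrangement A"
  shows "\<forall>s\<in>pseudo_descr A. length s = length A"
    and "pseudo_descr A \<noteq> {}"
    and "\<forall>i<length A. \<exists>s\<in>pseudo_descr A. s!i = Zer"
    and "\<forall>i<length A. \<forall>j<length A. i \<noteq> j \<longrightarrow> (\<exists>s\<in>pseudo_descr A. s!i = Zer \<and> s!j \<noteq> Zer)"
    and "\<forall>i<length A. \<forall>j<length A. i \<noteq> j \<longrightarrow> (\<exists>s\<in>pseudo_descr A. s!i = Zer \<and> s!j = Zer)"
proof -
  define P where "P p = map (\<lambda>l. sign_of (pl_fun l p)) A" for p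
  have PD: "P p \<in> pseudo_descr A" for p unfolding pseudo_descr_nth P_def by blast
  have Pn: "i < length A \<Longrightarrow> P p ! i = sign_of (pl_fun (A!i) p)" for i p by (simp add: P_def)
  show "\<forall>s\<in>pseudo_descr A. length s = length A" by (auto simp: pseudo_descr_nth)
  show "pseudo_descr A \<noteq> {}" using PD by blast
  show "\<forall>i<length A. \<exists>s\<in>pseudo_descr A. s!i = Zer"
  proof (intro allI impI)
    fix i assume i: "i < length A"
    show "\<exists>s\<in>pseudo_descr A. s!i = Zer"
      using PD[of "(0, fst (A!i) 0)"] Pn[OF i] pl_on sign_of_Zer by metis
  qed
  show "\<forall>i<length A. \<forall>j<length A. i \<noteq> j \<longrightarrow> (\<exists>s\<in>pseudo_descr A. s!i = Zer \<and> s!j \<noteq> Zer)"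
  proof (intro allI impI)
    fix i j assume ij: "i < length A" "j < length A" "i \<noteq> j"
    have "\<exists>x. fst (A!i) x \<noteq> fst (A!j) x"
    proof (rule ccontr)
      assume "\<not> ?thesis"
      then have "fst (A!i) 0 = fst (A!j) 0" "fst (A!i) 1 = fst (A!j) 1" by auto
      then show False using A ij unfolding simple_pseudoline_arrangement_def pseudoline_arrangement_def
        by (metis zero_neq_one)
    qed
    then obtain x where x: "fst (A!i) x \<noteq> fst (A!j) x" by blast
    have "P (x, fst (A!i) x) ! i = Zer" using Pn[OF ij(1)] pl_on sign_of_Zer by metis
    moreover have "P (x, fst (A!i) x) ! j \<noteq> Zer" using Pn[OF ij(2)] pl_off sign_of_Zer x by metis
    ultimately show "\<exists>s\<in>pseudo_descr A. s!i = Zer \<and> s!j \<noteq> Zer" using PD by blast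
  qed
  show "\<forall>i<length A. \<forall>j<length A. i \<noteq> j \<longrightarrow> (\<exists>s\<in>pseudo_descr A. s!i = Zer \<and> s!j = Zer)"
  proof (intro allI impI)
    fix i j assume ij: "i < length A" "j < length A" "i \<noteq> j"
    obtain x where x: "fst (A!i) x = fst (A!j) x"
      using A ij unfolding simple_pseudoline_arrangement_def by blast
    have "P (x, fst (A!i) x) ! i = Zer" using Pn[OF ij(1)] pl_on sign_of_Zer by metis
    moreover have "P (x, fst (A!i) x) ! j = Zer" using Pn[OF ij(2)] pl_off sign_of_Zer x by metis
    ultimately show "\<exists>s\<in>pseudo_descr A. s!i = Zer \<and> s!j = Zer" using PD by blast
  qed
qed

lemma hyp_zero:
  assumes "s \<in> hyp_descr H" "i < length H"
  shows "\<exists>x\<in>klein_disk. sv H x = s \<and> sign_of (line_fun (H!i) x) = s!i"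
  using assms unfolding hyp_descr_sv by (auto simp: sv_nth)

lemma hyp_from_D:
  assumes nd: "\<forall>l\<in>set H. nondeg_line l"
    and D: "hyp_descr H = D"
    and z1: "\<forall>i<length H. \<exists>s\<in>D. s!i = Zer"
    and z2: "\<forall>i<length H. \<forall>j<length H. i \<noteq> j \<longrightarrow> (\<exists>s\<in>D. s!i = Zer \<and> s!j \<noteq> Zer)"
    and z3: "\<forall>i<length H. \<forall>j<length H. i \<noteq> j \<longrightarrow> (\<exists>s\<in>D. s!i = Zer \<and> s!j = Zer)"
  shows "hyp_line_arrangement H" "vert_ok H"
proof -
  have A: "\<forall>l\<in>set H. nondeg_line l \<and> (\<exists>p\<in>klein_disk. line_fun l p = 0)"
  proof
    fix l assume "l \<in> set H"
    then obtain i where i: "i < length H" "l = H!i" by (metis in_set_conv_nth)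
    then obtain s where s: "s \<in> D" "s!i = Zer" using z1 by blast
    then obtain x where "x \<in> klein_disk" "sign_of (line_fun (H!i) x) = s!i"
      using hyp_zero[of s H i] D i by blast
    then show "nondeg_line l \<and> (\<exists>p\<in>klein_disk. line_fun l p = 0)"
      using nd \<open>l \<in> set H\<close> s i sign_of_Zer by metis
  qed
  have B: "\<forall>i < length H. \<forall>j < length H. i \<noteq> j \<longrightarrow>
        {p \<in> klein_disk. line_fun (H!i) p = 0} \<noteq> {p \<in> klein_disk. line_fun (H!j) p = 0}"
  proof (intro allI impI)
    fix i j assume ij: "i < length H" "j < length H" "i \<noteq> j"
    then obtain s where s: "s \<in> D" "s!i = Zer" "s!j \<noteq> Zer" using z2 by blast
    then obtain x where x: "x \<in> klein_disk" "sv H x = s" using D unfolding hyp_descr_sv by blast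
    have "line_fun (H!i) x = 0" "line_fun (H!j) x \<noteq> 0"
      using x s ij sv_nth sign_of_Zer by metis+
    then show "{p \<in> klein_disk. line_fun (H!i) p = 0} \<noteq> {p \<in> klein_disk. line_fun (H!j) p = 0}"
      using x by blast
  qed
  show "hyp_line_arrangement H" unfolding hyp_line_arrangement_def using A B by blast
  show "vert_ok H" unfolding vert_ok_def
  proof (intro allI impI)
    fix i j assume ij: "i < length H" "j < length H" "i \<noteq> j"
    then obtain s where s: "s \<in> D" "s!i = Zer" "s!j = Zer" using z3 by blast
    then obtain x where x: "x \<in> klein_disk" "sv H x = s" using D unfolding hyp_descr_sv by blast
    have "line_fun (H!i) x = 0" "line_fun (H!j) x = 0"
      using x s ij sv_nth sign_of_Zer by metis+
    then show "\<exists>v\<in>klein_disk. line_fun (H!i) v = 0 \<and> line_fun (H!j) v = 0" using x by blast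
  qed
qed

lemma hyp_euclid_arr:
  assumes "hyp_line_arrangement H" shows "euclid_line_arrangement H"
  using assms unfolding hyp_line_arrangement_def euclid_line_arrangement_def by blast

lemma finite_sign3: "finite (UNIV :: sign3 set)"
proof -
  have "UNIV = {Neg, Zer, Pos}" using sign3.exhaust by auto
  then show ?thesis by (metis finite_insert finite.emptyI)
qed

lemma bound_lemma:
  fixes f :: "'p \<Rightarrow> real"
  assumes "finite D" "\<forall>s\<in>D. \<exists>p. P s p"
  shows "\<exists>B>0. \<forall>s\<in>D. \<exists>p. P s p \<and> f p < B"
  using assms
proof (induction D rule: finite_induct)
  case empty then show ?case by (intro exI[of _ 1]) auto
next
  case (insert s D)
  then obtain B where B: "B > 0" "\<forall>s\<in>D. \<exists>p. P s p \<and> f p < B" by auto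
  obtain p where p: "P s p" using insert.prems by auto
  show ?case
  proof (intro exI[of _ "max B (f p + 1)"] conjI ballI)
    show "max B (f p + 1) > 0" using B by simp
    fix s' assume "s' \<in> insert s D"
    then show "\<exists>q. P s' q \<and> f q < max B (f p + 1)"
    proof
      assume "s' = s" then show ?thesis using p by (intro exI[of _ p]) auto
    next
      assume "s' \<in> D"
      then obtain q where "P s' q" "f q < B" using B by blast
      then show ?thesis by (intro exI[of _ q]) auto
    qed
  qed
qed

definition scl :: "real \<Rightarrow> oline \<Rightarrow> oline" where
  "scl R l = (fst l, fst (snd l), snd (snd l) / R)"

lemma scl_fun: "R > 0 \<Longrightarrow> line_fun (scl R l) x = line_fun l (R * fst x, R * snd x) / R"
  by (cases l) (simp add: scl_def line_fun_def field_simps)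

lemma sign_of_div: "R > 0 \<Longrightarrow> sign_of (r / R) = sign_of r"
  by (simp add: sign_of_def divide_less_0_iff)

lemma sv_scl: "R > 0 \<Longrightarrow> sv (map (scl R) L) x = sv L (R * fst x, R * snd x)"
  by (simp add: sv_def scl_fun sign_of_div)

lemma euc_to_hyp:
  assumes D: "euclid_descr L = D" and eu: "euclid_line_arrangement L"
  shows "\<exists>R>0. hyp_descr (map (scl R) L) = D \<and> (\<forall>l\<in>set (map (scl R) L). nondeg_line l)"
proof -
  have "D \<subseteq> {xs. set xs \<subseteq> UNIV \<and> length xs = length L}"
    using D unfolding euclid_descr_sv by auto
  then have fin: "finite D" using finite_lists_length_eq[OF finite_sign3] finite_subset by blast
  have "\<forall>s\<in>D. \<exists>p. sv L p = s" using D unfolding euclid_descr_sv by auto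
  then obtain B where B: "B > 0" "\<forall>s\<in>D. \<exists>p. sv L p = s \<and> (fst p)\<^sup>2 + (snd p)\<^sup>2 < B"
    using bound_lemma[OF fin, of "\<lambda>s p. sv L p = s" "\<lambda>p. (fst p)\<^sup>2 + (snd p)\<^sup>2"] by blast
  define R where "R = B + 1"
  have m: "(B+1)*1 \<le> (B+1)*(B+1)" by (rule mult_left_mono) (use B in auto)
  have R2: "B < R\<^sup>2" unfolding R_def power2_eq_square by (rule less_le_trans[OF _ m]) simp
  have R: "R > 0" "B < R\<^sup>2" using B R2 by (auto simp: R_def)
  have "hyp_descr (map (scl R) L) = D"
  proof
    show "hyp_descr (map (scl R) L) \<subseteq> D"
      unfolding hyp_descr_sv sv_scl[OF R(1)] using D unfolding euclid_descr_sv by auto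
    show "D \<subseteq> hyp_descr (map (scl R) L)"
    proof
      fix s assume "s \<in> D"
      then obtain p where p: "sv L p = s" "(fst p)\<^sup>2 + (snd p)\<^sup>2 < B" using B by blast
      define x where "x = (fst p / R, snd p / R)"
      have "(fst x)\<^sup>2 + (snd x)\<^sup>2 = ((fst p)\<^sup>2 + (snd p)\<^sup>2) / R\<^sup>2"
        by (simp add: x_def power_divide add_divide_distrib)
      also have "\<dots> < 1" using p R by (simp add: divide_less_eq)
      finally have "x \<in> klein_disk" by (simp add: klein_disk_def)
      moreover have "(R * fst x, R * snd x) = p" using R by (simp add: x_def)
      ultimately show "s \<in> hyp_descr (map (scl R) L)"
        unfolding hyp_descr_sv using sv_scl[OF R(1)] p by (metis image_eqI)
    qed
  qed
  moreover have "\<forall>l\<in>set (map (scl R) L). nondeg_line l"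
    using eu unfolding euclid_line_arrangement_def
    by (auto simp: scl_def nondeg_line_def split: prod.splits)
  ultimately show ?thesis using R by blast
qed

theorem proposition1:
  fixes D :: "sign3 list set"
  assumes "\<exists>A. simple_pseudoline_arrangement A \<and> pseudo_descr A = D"
  shows "(\<exists>L. euclid_line_arrangement L \<and> euclid_descr L = D) \<longleftrightarrow>
         (\<exists>H. hyp_line_arrangement H \<and> hyp_descr H = D)"
proof -
  obtain A where A: "simple_pseudoline_arrangement A" "pseudo_descr A = D" using assms by blast
  note F = pseudo_facts[OF A(1), unfolded A(2)]
  obtain s0 where s0: "s0 \<in> D" using F(2) by blast
  have len: "length L = length A" if "sv L ` S = D" for L S
  proof -
    from s0 that obtain x where "s0 = sv L x" by blast
    then show ?thesis using F(1) s0 by (metis length_sv)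
  qed
  show ?thesis
  proof
    assume "\<exists>L. euclid_line_arrangement L \<and> euclid_descr L = D"
    then obtain L where L: "euclid_line_arrangement L" "euclid_descr L = D" by blast
    obtain R where R: "R > 0" "hyp_descr (map (scl R) L) = D"
      "\<forall>l\<in>set (map (scl R) L). nondeg_line l"
      using euc_to_hyp[OF L(2) L(1)] by blast
    have "length (map (scl R) L) = length A" using len R(2) unfolding hyp_descr_sv by blast
    then have "hyp_line_arrangement (map (scl R) L)"
      using hyp_from_D(1)[OF R(3) R(2)] F by simp
    then show "\<exists>H. hyp_line_arrangement H \<and> hyp_descr H = D" using R by blast
  next
    assume "\<exists>H. hyp_line_arrangement H \<and> hyp_descr H = D"
    then obtain H where H: "hyp_line_arrangement H" "hyp_descr H = D" by blast
    have nd: "\<forall>l\<in>set H. nondeg_line l" using H(1) unfolding hyp_line_arrangement_def by blast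
    have "length H = length A" using len H(2) unfolding hyp_descr_sv by blast
    then have "vert_ok H" using hyp_from_D(2)[OF nd H(2)] F by simp
    then have "euclid_descr H = D" using hyp_to_euc[OF H(1)] H(2) by simp
    then show "\<exists>L. euclid_line_arrangement L \<and> euclid_descr L = D"
      using hyp_euclid_arr[OF H(1)] by blast
  qed
qed

end
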